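(* Let $\mathscr{H}$ be a complex Hilbert space, $N(\cdot)$ a norm on $\mathbb{B}(\mathscr{H})$, and $B,C\in\mathbb{B}(\mathscr{H})$. Then for every $\theta\in\mathbb{R}$, $$\frac12 w_N(B+e^{i\theta}C)+\frac12|w_N(B)-w_N(C)|\leq w_{(N,e)}(B,C).$$
   Context: For $T\in\mathbb{B}(\mathscr{H})$: $\Re(T)=\frac12(T+T^* )$ and $w_N(T)=\sup_{\theta\in\mathbb{R}}N(\Re(e^{i\theta}T))$. For $B,C\in\mathbb{B}(\mathscr{H})$, $w_{(N,e)}(B,C)=\sup_{\lambda_1,\lambda_2\in\mathbb{C},\ |\lambda_1|^2+|\lambda_2|^2\leq 1}\sup_{\theta\in\mathbb{R}} N(\Re(e^{i\theta}(\lambda_1B+\lambda_2C)))$. *)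

theory Defs
  imports "HOL-Analysis.Analysis"
begin

text \<open>Convention: the inner product is conjugate-linear in the first argument.\<close>

class cvector = real_vector +
  fixes scaleC :: "complex \<Rightarrow> 'a \<Rightarrow> 'a"
  assumes scaleC_add_right: "scaleC a (x + y) = scaleC a x + scaleC a y"
    and scaleC_add_left: "scaleC (a + b) x = scaleC a x + scaleC b x"
    and scaleC_scaleC: "scaleC a (scaleC b x) = scaleC (a * b) x"
    and scaleC_one: "scaleC 1 x = x"
    and scaleR_scaleC: "scaleR r x = scaleC (complex_of_real r) x"

class complex_inner = cvector + real_normed_vector +
  fixes cinner :: "'a \<Rightarrow> 'a \<Rightarrow> complex"
  assumes cinner_commute: "cinner x y = cnj (cinner y x)"
    and cinner_add_left: "cinner (x + y) z = cinner x z + cinner y z"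
    and cinner_scaleC_left: "cinner (scaleC a x) y = cnj a * cinner x y"
    and cinner_self_real_nonneg: "Im (cinner x x) = 0 \<and> 0 \<le> Re (cinner x x)"
    and cinner_self_eq_zero: "cinner x x = 0 \<longleftrightarrow> x = 0"
    and norm_eq_sqrt_cinner: "norm x = sqrt (Re (cinner x x))"

class chilbert_space = complex_inner + complete_space

definition bounded_ops :: "('a::complex_inner \<Rightarrow> 'a) set" where
  "bounded_ops = {T. (\<forall>x y. T (x + y) = T x + T y) \<and> (\<forall>c x. T (scaleC c x) = scaleC c (T x))
                     \<and> (\<exists>K. \<forall>x. norm (T x) \<le> norm x * K)}"

definition cadj :: "('a::complex_inner \<Rightarrow> 'a) \<Rightarrow> 'a \<Rightarrow> 'a" where
  "cadj T = (SOME S. \<forall>x y. cinner (T x) y = cinner x (S y))"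

definition op_scale :: "complex \<Rightarrow> ('a::complex_inner \<Rightarrow> 'a) \<Rightarrow> 'a \<Rightarrow> 'a" where
  "op_scale c T = (\<lambda>x. scaleC c (T x))"

definition op_Re :: "('a::complex_inner \<Rightarrow> 'a) \<Rightarrow> 'a \<Rightarrow> 'a" where
  "op_Re T = (\<lambda>x. scaleR (1/2) (T x + cadj T x))"

definition is_op_norm :: "(('a::complex_inner \<Rightarrow> 'a) \<Rightarrow> real) \<Rightarrow> bool" where
  "is_op_norm N \<longleftrightarrow>
     (\<forall>T\<in>bounded_ops. 0 \<le> N T) \<and>
     (\<forall>T\<in>bounded_ops. N T = 0 \<longleftrightarrow> T = (\<lambda>x. 0)) \<and>
     (\<forall>c. \<forall>T\<in>bounded_ops. N (op_scale c T) = cmod c * N T) \<and>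
     (\<forall>S\<in>bounded_ops. \<forall>T\<in>bounded_ops. N (\<lambda>x. S x + T x) \<le> N S + N T)"

definition wN :: "(('a::complex_inner \<Rightarrow> 'a) \<Rightarrow> real) \<Rightarrow> ('a \<Rightarrow> 'a) \<Rightarrow> real" where
  "wN N T = (SUP \<theta>::real. N (op_Re (op_scale (cis \<theta>) T)))"

definition wNe :: "(('a::complex_inner \<Rightarrow> 'a) \<Rightarrow> real) \<Rightarrow> ('a \<Rightarrow> 'a) \<Rightarrow> ('a \<Rightarrow> 'a) \<Rightarrow> real" where
  "wNe N B C = (SUP l \<in> {(l1, l2). (cmod l1)\<^sup>2 + (cmod l2)\<^sup>2 \<le> 1}.
                  SUP \<theta>::real. N (op_Re (op_scale (cis \<theta>)
                     (\<lambda>x. scaleC (fst l) (B x) + scaleC (snd l) (C x)))))"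

end

theory Submission
  imports Defs
begin

lemma scaleC_zero_left [simp]: "scaleC 0 (x::'a::cvector) = 0"
proof -
  have "scaleC 0 x = scaleC 0 x + scaleC (0::complex) x"
    by (metis add_0 scaleC_add_left)
  then show ?thesis by simp
qed

lemma scaleC_zero_right [simp]: "scaleC a (0::'a::cvector) = 0"
proof -
  have "scaleC a (0::'a) = scaleC a 0 + scaleC a 0"
    by (metis add_0 scaleC_add_right)
  then show ?thesis by simp
qed

lemma scaleC_minus_left: "scaleC (- a) (x::'a::cvector) = - scaleC a x"
proof -
  have "scaleC (- a) x + scaleC a x = 0"
    using scaleC_add_left[of "- a" a x] by simp
  then show ?thesis by (simp add: eq_neg_iff_add_eq_0)
qed

lemma scaleC_minus_right: "scaleC a (- x::'a::cvector) = - scaleC a x"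
proof -
  have "scaleC a (- x) + scaleC a x = 0"
    using scaleC_add_right[of a "- x" x] by simp
  then show ?thesis by (simp add: eq_neg_iff_add_eq_0)
qed

lemma scaleC_diff_right: "scaleC a (x - y::'a::cvector) = scaleC a x - scaleC a y"
  by (simp only: diff_conv_add_uminus scaleC_add_right scaleC_minus_right)

lemma scaleC_diff_left: "scaleC (a - b) (x::'a::cvector) = scaleC a x - scaleC b x"
  by (simp only: diff_conv_add_uminus scaleC_add_left scaleC_minus_left)

lemma scaleC_of_real: "scaleC (complex_of_real r) (x::'a::cvector) = scaleR r x"
  by (simp add: scaleR_scaleC)

lemma cinner_zero_left [simp]: "cinner 0 (x::'a::complex_inner) = 0"
proof -
  have "cinner 0 x = cinner 0 x + cinner 0 x"
    using cinner_add_left[of 0 0 x] by simp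
  then show ?thesis by simp
qed

lemma cinner_zero_right [simp]: "cinner (x::'a::complex_inner) 0 = 0"
  by (subst cinner_commute) simp

lemma cinner_add_right: "cinner (x::'a::complex_inner) (y + z) = cinner x y + cinner x z"
proof -
  have "cinner x (y + z) = cnj (cinner (y + z) x)" by (rule cinner_commute)
  also have "\<dots> = cnj (cinner y x) + cnj (cinner z x)" by (simp add: cinner_add_left)
  finally show ?thesis by (simp add: cinner_commute[of x y] cinner_commute[of x z])
qed

lemma cinner_scaleC_right: "cinner (x::'a::complex_inner) (scaleC a y) = a * cinner x y"
proof -
  have "cinner x (scaleC a y) = cnj (cinner (scaleC a y) x)" by (rule cinner_commute)
  also have "\<dots> = a * cnj (cinner y x)" by (simp add: cinner_scaleC_left)
  finally show ?thesis by (simp add: cinner_commute[of x y])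
qed

lemma cinner_minus_left: "cinner (- x::'a::complex_inner) y = - cinner x y"
proof -
  have "cinner (- x) y + cinner x y = 0"
    using cinner_add_left[of "- x" x y] by simp
  then show ?thesis by (simp add: eq_neg_iff_add_eq_0)
qed

lemma cinner_minus_right: "cinner (x::'a::complex_inner) (- y) = - cinner x y"
proof -
  have "cinner x (- y) + cinner x y = 0"
    using cinner_add_right[of x "- y" y] by simp
  then show ?thesis by (simp add: eq_neg_iff_add_eq_0)
qed

lemma cinner_diff_left: "cinner (x - y::'a::complex_inner) z = cinner x z - cinner y z"
  by (simp only: diff_conv_add_uminus cinner_add_left cinner_minus_left)

lemma cinner_diff_right: "cinner (x::'a::complex_inner) (y - z) = cinner x y - cinner x z"
  by (simp only: diff_conv_add_uminus cinner_add_right cinner_minus_right)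

lemma cinner_self: "cinner (x::'a::complex_inner) x = complex_of_real ((norm x)\<^sup>2)"
proof -
  have "Im (cinner x x) = 0" "0 \<le> Re (cinner x x)" using cinner_self_real_nonneg by auto
  then show ?thesis by (simp add: norm_eq_sqrt_cinner complex_eq_iff)
qed

lemma norm_sq_Re: "(norm (x::'a::complex_inner))\<^sup>2 = Re (cinner x x)"
  by (simp add: cinner_self)

lemma norm_scaleC: "norm (scaleC a (x::'a::complex_inner)) = cmod a * norm x"
proof -
  have "cinner (scaleC a x) (scaleC a x) = cnj a * a * cinner x x"
    by (simp add: cinner_scaleC_left cinner_scaleC_right mult.assoc)
  then have "(norm (scaleC a x))\<^sup>2 = Re (cnj a * a * cinner x x)"
    by (simp only: norm_sq_Re)
  also have "\<dots> = (cmod a * norm x)\<^sup>2"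
    by (simp add: cinner_self power_mult_distrib complex_norm_square[symmetric] mult.commute)
  finally show ?thesis
    by (metis norm_ge_zero power2_eq_imp_eq zero_le_mult_iff)
qed

lemma norm_sq_diff_scaleC:
  "(norm (u - scaleC t (v::'a::complex_inner)))\<^sup>2
     = (norm u)\<^sup>2 - 2 * Re (t * cinner u v) + (cmod t)\<^sup>2 * (norm v)\<^sup>2"
proof -
  have "cinner (u - scaleC t v) (u - scaleC t v)
      = cinner u u - t * cinner u v - cnj t * cinner v u + cnj t * t * cinner v v"
    by (simp add: cinner_diff_left cinner_diff_right cinner_scaleC_left cinner_scaleC_right
        algebra_simps)
  moreover have "Re (cnj t * cinner v u) = Re (t * cinner u v)"
    by (subst cinner_commute) (metis complex_cnj_mult cnj.sel(1))
  moreover have "Re (cnj t * t * cinner v v) = (cmod t)\<^sup>2 * (norm v)\<^sup>2"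
    by (simp add: cinner_self complex_norm_square[symmetric] mult.commute)
  ultimately show ?thesis by (simp add: norm_sq_Re)
qed

lemma cauchy_schwarz: "cmod (cinner (x::'a::complex_inner) y) \<le> norm x * norm y"
proof (cases "y = 0")
  case True then show ?thesis by simp
next
  case False
  define a where "a = cinner x y"
  define r where "r = (norm y)\<^sup>2"
  have r: "r > 0" using False by (simp add: r_def)
  define t where "t = cnj a / r"
  have "0 \<le> (norm (x - scaleC t y))\<^sup>2" by simp
  also have "\<dots> = (norm x)\<^sup>2 - 2 * Re (t * a) + (cmod t)\<^sup>2 * r"
    by (simp add: norm_sq_diff_scaleC a_def r_def)
  also have "Re (t * a) = (cmod a)\<^sup>2 / r"
    by (simp add: t_def mult.commute complex_norm_square[symmetric])
  also have "(cmod t)\<^sup>2 * r = (cmod a)\<^sup>2 / r"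
    using r by (simp add: t_def norm_divide power2_eq_square)
  finally have "(cmod a)\<^sup>2 / r \<le> (norm x)\<^sup>2" by simp
  then have "(cmod a)\<^sup>2 \<le> (norm x)\<^sup>2 * r" using r by (simp add: divide_le_eq)
  then have "(cmod a)\<^sup>2 \<le> (norm x * norm y)\<^sup>2" by (simp add: r_def power_mult_distrib)
  then show ?thesis unfolding a_def
    by (rule power2_le_imp_le) simp
qed

lemma Re_cinner_commute: "Re (cinner (b::'a::complex_inner) a) = Re (cinner a b)"
  by (subst cinner_commute) (simp only: cnj.sel(1))

lemma norm_sq_add: "(norm (a + b::'a::complex_inner))\<^sup>2 = (norm a)\<^sup>2 + 2 * Re (cinner a b) + (norm b)\<^sup>2"
proof -
  have "cinner (a + b) (a + b) = cinner a a + cinner a b + (cinner b a + cinner b b)"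
    by (simp only: cinner_add_left cinner_add_right add_ac)
  then have "Re (cinner (a + b) (a + b)) = Re (cinner a a) + Re (cinner a b) + (Re (cinner b a) + Re (cinner b b))"
    by (simp only: plus_complex.sel)
  then show ?thesis by (simp only: norm_sq_Re Re_cinner_commute)
qed

lemma norm_sq_diff: "(norm (a - b::'a::complex_inner))\<^sup>2 = (norm a)\<^sup>2 - 2 * Re (cinner a b) + (norm b)\<^sup>2"
proof -
  have "cinner (a - b) (a - b) = cinner a a - cinner a b - (cinner b a - cinner b b)"
    by (simp add: cinner_diff_left cinner_diff_right algebra_simps)
  then have "Re (cinner (a - b) (a - b)) = Re (cinner a a) - Re (cinner a b) - (Re (cinner b a) - Re (cinner b b))"
    by (simp only: minus_complex.sel)
  then show ?thesis by (simp only: norm_sq_Re Re_cinner_commute)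
qed

lemma parallelogram:
  "(norm (a + b::'a::complex_inner))\<^sup>2 + (norm (a - b))\<^sup>2 = 2 * (norm a)\<^sup>2 + 2 * (norm b)\<^sup>2"
  unfolding norm_sq_add norm_sq_diff by simp

lemma riesz:
  fixes f :: "'a::chilbert_space \<Rightarrow> complex"
  assumes add: "\<And>x y. f (x + y) = f x + f y"
    and scal: "\<And>c x. f (scaleC c x) = c * f x"
    and bnd: "\<And>x. cmod (f x) \<le> norm x * K"
  shows "\<exists>z. \<forall>x. f x = cinner z x"
proof (cases "\<forall>x. f x = 0")
  case True
  then show ?thesis by (intro exI[of _ 0]) simp
next
  case False
  then obtain x0 where x0: "f x0 \<noteq> 0" by blast
  have f0: "f 0 = 0" using scal[of 0 0] by simp
  have fdiff: "f (x - y) = f x - f y" for x y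
    using add[of "x - y" y] by simp
  have fR: "f (scaleR r x) = scaleR r (f x)" for r x
    using scal[of "complex_of_real r" x] by (simp add: scaleR_scaleC scaleR_conv_of_real)
  have bl: "bounded_linear f"
  proof (rule bounded_linear_intro[of f K])
    show "f (x + y) = f x + f y" for x y by (rule add)
    show "f (r *\<^sub>R x) = r *\<^sub>R f x" for r x by (rule fR)
    show "norm (f x) \<le> norm x * K" for x using bnd by simp
  qed
  define S where "S = {(norm (x0 - m))\<^sup>2 | m. f m = 0}"
  define D where "D = Inf S"
  have Sne: "S \<noteq> {}" using f0 by (auto simp: S_def)
  have Sbdd: "bdd_below S" unfolding S_def by (rule bdd_belowI[of _ 0]) auto
  have Dle: "D \<le> (norm (x0 - m))\<^sup>2" if "f m = 0" for m
    unfolding D_def by (rule cInf_lower) (use that Sbdd in \<open>auto simp: S_def\<close>)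
  have "\<exists>m. f m = 0 \<and> (norm (x0 - m))\<^sup>2 < D + inverse (real (Suc n))" for n
  proof -
    have "Inf S < D + inverse (real (Suc n))" by (simp add: D_def)
    from cInf_lessD[OF Sne this] show ?thesis by (auto simp: S_def)
  qed
  then have "\<forall>n. \<exists>m. f m = 0 \<and> (norm (x0 - m))\<^sup>2 < D + inverse (real (Suc n))"
    by blast
  from choice[OF this] obtain X where X: "\<And>n. f (X n) = 0"
    and Xl: "\<And>n. (norm (x0 - X n))\<^sup>2 < D + inverse (real (Suc n))"
    by blast
  have cb: "(norm (X k - X n))\<^sup>2 \<le> 2 * inverse (real (Suc n)) + 2 * inverse (real (Suc k))" for n k
  proof -
    define w where "w = scaleR (1/2) (X n + X k)"
    have fw: "f w = 0" using X by (simp add: w_def fR add)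
    have e1: "(x0 - X n) + (x0 - X k) = scaleR 2 (x0 - w)"
      by (simp add: w_def algebra_simps scaleR_2)
    have e2: "(x0 - X n) - (x0 - X k) = X k - X n" by simp
    have "(norm ((x0 - X n) + (x0 - X k)))\<^sup>2 = 4 * (norm (x0 - w))\<^sup>2"
      unfolding e1 by (simp add: power_mult_distrib)
    then have "4 * D \<le> (norm ((x0 - X n) + (x0 - X k)))\<^sup>2" using Dle[OF fw] by simp
    moreover note parallelogram[of "x0 - X n" "x0 - X k", unfolded e2]
    moreover note Xl[of n] Xl[of k]
    ultimately show ?thesis by linarith
  qed
  have "Cauchy X"
  proof (rule CauchyI)
    fix e :: real assume e: "0 < e"
    then have "0 < e\<^sup>2 / 4" by simp
    from reals_Archimedean[OF this] obtain M where M: "inverse (real (Suc M)) < e\<^sup>2 / 4" by auto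
    have "norm (X a - X b) < e" if "a \<ge> M" "b \<ge> M" for a b
    proof -
      have "inverse (real (Suc a)) \<le> inverse (real (Suc M))"
           "inverse (real (Suc b)) \<le> inverse (real (Suc M))"
        using that by (auto intro!: le_imp_inverse_le)
      note this cb[of b a] cb[of a b] M
      moreover have "(norm (X a - X b))\<^sup>2 = (norm (X b - X a))\<^sup>2"
        by (simp add: norm_minus_commute)
      ultimately have "(norm (X a - X b))\<^sup>2 < e\<^sup>2" by linarith
      then show ?thesis using e by (simp add: power_less_imp_less_base)
    qed
    then show "\<exists>M. \<forall>m\<ge>M. \<forall>n\<ge>M. norm (X m - X n) < e" by blast
  qed
  then obtain m where lim: "X \<longlonglongrightarrow> m"
    using Cauchy_convergent_iff convergent_def by blast
  have "(\<lambda>n. f (X n)) \<longlonglongrightarrow> f m" by (rule bounded_linear.tendsto[OF bl lim])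
  then have fm: "f m = 0" using X by (simp add: LIMSEQ_const_iff)
  have "(\<lambda>n. (norm (x0 - X n))\<^sup>2) \<longlonglongrightarrow> (norm (x0 - m))\<^sup>2"
    by (intro tendsto_intros lim)
  moreover have "\<exists>N. \<forall>n\<ge>N. (norm (x0 - X n))\<^sup>2 \<le> D + inverse (real (Suc n))"
    using Xl less_imp_le by blast
  ultimately have um: "(norm (x0 - m))\<^sup>2 \<le> D"
    by (rule LIMSEQ_le[OF _ LIMSEQ_inverse_real_of_nat_add])
  define u where "u = x0 - m"
  have fu: "f u = f x0" using fm by (simp add: u_def fdiff)
  have orth: "cinner u v = 0" if fv: "f v = 0" for v
  proof -
    define c where "c = cinner u v"
    define s where "s = 1 / ((norm v)\<^sup>2 + 1)"
    have np: "0 < (norm v)\<^sup>2 + 1" using zero_le_power2[of "norm v"] by linarith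
    have s: "s > 0" "s * (norm v)\<^sup>2 < 1" using np by (auto simp: s_def field_simps)
    define t where "t = complex_of_real s * cnj c"
    have "f (m + scaleC t v) = 0" using fm fv by (simp add: add scal)
    from Dle[OF this] have h1: "D \<le> (norm (x0 - (m + scaleC t v)))\<^sup>2" .
    have eq: "x0 - (m + scaleC t v) = u - scaleC t v" by (simp add: u_def algebra_simps)
    from h1 have h2: "D \<le> (norm (u - scaleC t v))\<^sup>2" by (simp only: eq)
    from um have h3: "(norm u)\<^sup>2 \<le> D" by (simp only: u_def)
    from h3 h2 have "(norm u)\<^sup>2 \<le> (norm (u - scaleC t v))\<^sup>2" by (rule order_trans)
    also have "\<dots> = (norm u)\<^sup>2 - 2 * Re (t * c) + (cmod t)\<^sup>2 * (norm v)\<^sup>2"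
      by (simp add: norm_sq_diff_scaleC c_def)
    also have "Re (t * c) = s * (cmod c)\<^sup>2"
    proof -
      have "t * c = complex_of_real s * (c * cnj c)" by (simp add: t_def ac_simps)
      also have "\<dots> = complex_of_real (s * (cmod c)\<^sup>2)"
        by (simp only: complex_norm_square[symmetric] of_real_mult)
      finally show ?thesis by simp
    qed
    also have "(cmod t)\<^sup>2 = s\<^sup>2 * (cmod c)\<^sup>2"
      using s by (simp add: t_def norm_mult power_mult_distrib)
    finally have "2 * s * (cmod c)\<^sup>2 \<le> s * (s * (norm v)\<^sup>2) * (cmod c)\<^sup>2"
      by (simp add: power2_eq_square algebra_simps)
    then have "2 * (cmod c)\<^sup>2 \<le> (s * (norm v)\<^sup>2) * (cmod c)\<^sup>2"
      using s by (simp add: mult.assoc)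
    also have "\<dots> \<le> (cmod c)\<^sup>2" using s by (simp add: mult_left_le_one_le)
    finally have "(cmod c)\<^sup>2 \<le> 0" by simp
    then show ?thesis by (simp add: c_def)
  qed
  have u0: "cinner u u \<noteq> 0" using fu x0 f0 by (auto simp: cinner_self_eq_zero)
  define z where "z = scaleC (cnj (f u / cinner u u)) u"
  have "f x = cinner z x" for x
  proof -
    have "f (scaleC (f u) x - scaleC (f x) u) = 0"
      by (simp add: fdiff scal)
    from orth[OF this] have eq: "f u * cinner u x = f x * cinner u u"
      by (simp add: cinner_diff_right cinner_scaleC_right)
    have "f x = f u * cinner u x / cinner u u"
      using u0 eq by (simp add: eq_divide_eq)
    moreover have "cinner z x = f u / cinner u u * cinner u x"
      by (simp add: z_def cinner_scaleC_left)
    ultimately show ?thesis by simp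
  qed
  then show ?thesis by blast
qed

lemma cinner_ext:
  assumes "\<And>x. cinner x a = cinner x (b::'a::complex_inner)"
  shows "a = b"
proof -
  have "cinner (a - b) (a - b) = 0"
    by (simp add: cinner_diff_right assms)
  then show ?thesis by (simp add: cinner_self_eq_zero)
qed

lemma cadj_unique:
  assumes "\<forall>x y. cinner (T x) y = cinner x (S y)"
  shows "cadj T = S"
proof -
  have P: "\<forall>x y. cinner (T x) y = cinner x (cadj T y)"
    unfolding cadj_def by (rule someI[of _ S]) (rule assms)
  show ?thesis
  proof
    fix y
    show "cadj T y = S y"
      by (rule cinner_ext) (use P assms in metis)
  qed
qed

lemma bounded_opsD:
  assumes "T \<in> bounded_ops"
  shows "T (x + y) = T x + T y" "T (scaleC c x) = scaleC c (T x)"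
    "\<exists>K\<ge>0. \<forall>x. norm (T x) \<le> norm x * K"
proof -
  show "T (x + y) = T x + T y" "T (scaleC c x) = scaleC c (T x)"
    using assms by (auto simp: bounded_ops_def)
  from assms obtain K where K: "\<forall>x. norm (T x) \<le> norm x * K"
    by (auto simp: bounded_ops_def)
  have "norm (T x) \<le> norm x * max K 0" for x
    using K mult_left_mono[of K "max K 0" "norm x"] by (meson max.cobounded1 norm_ge_zero order_trans)
  then show "\<exists>K\<ge>0. \<forall>x. norm (T x) \<le> norm x * K" by (intro exI[of _ "max K 0"]) auto
qed

lemma cadj_exists:
  assumes T: "(T::'a::chilbert_space \<Rightarrow> 'a) \<in> bounded_ops"
  shows "\<forall>x y. cinner (T x) y = cinner x (cadj T y)"
proof -
  obtain K where K: "K \<ge> 0" "\<And>x. norm (T x) \<le> norm x * K"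
    using bounded_opsD(3)[OF T] by blast
  have "\<exists>z. \<forall>x. cinner y (T x) = cinner z x" for y
  proof (rule riesz)
    show "cinner y (T (x1 + x2)) = cinner y (T x1) + cinner y (T x2)" for x1 x2
      by (simp add: bounded_opsD(1)[OF T] cinner_add_right)
    show "cinner y (T (scaleC c x)) = c * cinner y (T x)" for c x
      by (simp add: bounded_opsD(2)[OF T] cinner_scaleC_right)
    show "cmod (cinner y (T x)) \<le> norm x * (norm y * K)" for x
    proof -
      have "cmod (cinner y (T x)) \<le> norm y * norm (T x)" by (rule cauchy_schwarz)
      also have "\<dots> \<le> norm y * (norm x * K)" by (rule mult_left_mono[OF K(2)]) simp
      finally show ?thesis by (simp add: ac_simps)
    qed
  qed
  then have "\<forall>y. \<exists>z. \<forall>x. cinner y (T x) = cinner z x" by blast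
  from choice[OF this] obtain S where S: "\<And>y x. cinner y (T x) = cinner (S y) x" by blast
  have "\<forall>x y. cinner (T x) y = cinner x (S y)"
  proof (intro allI)
    fix x y
    have "cinner (T x) y = cnj (cinner y (T x))" by (rule cinner_commute)
    also have "\<dots> = cnj (cinner (S y) x)" by (simp only: S)
    also have "\<dots> = cinner x (S y)" by (simp add: cinner_commute[of x])
    finally show "cinner (T x) y = cinner x (S y)" .
  qed
  then have "cadj T = S" by (rule cadj_unique)
  with \<open>\<forall>x y. cinner (T x) y = cinner x (S y)\<close> show ?thesis by simp
qed

lemma cadj_bounded:
  assumes T: "(T::'a::chilbert_space \<Rightarrow> 'a) \<in> bounded_ops"
  shows "cadj T \<in> bounded_ops"
proof -
  note P = cadj_exists[OF T, rule_format]
  obtain K where K: "K \<ge> 0" "\<And>x. norm (T x) \<le> norm x * K"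
    using bounded_opsD(3)[OF T] by blast
  have add: "cadj T (y1 + y2) = cadj T y1 + cadj T y2" for y1 y2
    by (rule cinner_ext) (simp add: P[symmetric] cinner_add_right)
  have scal: "cadj T (scaleC c y) = scaleC c (cadj T y)" for c y
    by (rule cinner_ext) (simp add: P[symmetric] cinner_scaleC_right)
  have bnd: "norm (cadj T y) \<le> norm y * K" for y
  proof (cases "norm (cadj T y) = 0")
    case True then show ?thesis using K by simp
  next
    case False
    have "(norm (cadj T y))\<^sup>2 = Re (cinner (T (cadj T y)) y)"
      by (simp add: norm_sq_Re P)
    also have "\<dots> \<le> cmod (cinner (T (cadj T y)) y)" by (rule complex_Re_le_cmod)
    also have "\<dots> \<le> norm (T (cadj T y)) * norm y" by (rule cauchy_schwarz)
    also have "\<dots> \<le> (norm (cadj T y) * K) * norm y" by (rule mult_right_mono[OF K(2)]) simp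
    finally have "norm (cadj T y) * norm (cadj T y) \<le> norm (cadj T y) * (norm y * K)"
      by (simp add: power2_eq_square ac_simps)
    then show ?thesis using False by (simp add: mult_le_cancel_left)
  qed
  show ?thesis unfolding bounded_ops_def using add scal bnd by blast
qed

lemma bo_add:
  assumes S: "S \<in> bounded_ops" and T: "T \<in> bounded_ops"
  shows "(\<lambda>x. S x + T x) \<in> bounded_ops"
proof -
  obtain K1 where K1: "\<And>x. norm (S x) \<le> norm x * K1"
    using bounded_opsD(3)[OF S] by blast
  obtain K2 where K2: "\<And>x. norm (T x) \<le> norm x * K2"
    using bounded_opsD(3)[OF T] by blast
  have "norm (S x + T x) \<le> norm x * (K1 + K2)" for x
    using norm_triangle_ineq[of "S x" "T x"] K1[of x] K2[of x] by (simp add: distrib_left)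
  moreover have "S (x + y) + T (x + y) = (S x + T x) + (S y + T y)" for x y
    using bounded_opsD(1)[OF S] bounded_opsD(1)[OF T] by (simp add: algebra_simps)
  moreover have "S (scaleC c x) + T (scaleC c x) = scaleC c (S x + T x)" for c x
    using bounded_opsD(2)[OF S] bounded_opsD(2)[OF T] by (simp add: scaleC_add_right)
  ultimately show ?thesis
    unfolding bounded_ops_def by blast
qed

lemma bo_scale:
  assumes T: "(T::'a::complex_inner \<Rightarrow> 'a) \<in> bounded_ops"
  shows "op_scale c T \<in> bounded_ops"
proof -
  obtain K where K: "K \<ge> 0" "\<And>x. norm (T x) \<le> norm x * K"
    using bounded_opsD(3)[OF T] by blast
  have "norm (scaleC c (T x)) \<le> norm x * (cmod c * K)" for x
    using mult_left_mono[OF K(2)[of x], of "cmod c"] by (simp add: norm_scaleC ac_simps)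
  moreover have "scaleC c (scaleC d (T x)) = scaleC d (scaleC c (T x))" for d x
    by (simp add: scaleC_scaleC mult.commute)
  ultimately show ?thesis
    unfolding bounded_ops_def op_scale_def
    using bounded_opsD(1,2)[OF T]
    by (auto simp: scaleC_add_right)
qed

lemma cadj_add:
  assumes S: "(S::'a::chilbert_space \<Rightarrow> 'a) \<in> bounded_ops" and T: "T \<in> bounded_ops"
  shows "cadj (\<lambda>x. S x + T x) = (\<lambda>y. cadj S y + cadj T y)"
  by (rule cadj_unique)
    (simp add: cinner_add_left cinner_add_right cadj_exists[OF S, rule_format] cadj_exists[OF T, rule_format])

lemma cadj_scale:
  assumes T: "(T::'a::chilbert_space \<Rightarrow> 'a) \<in> bounded_ops"
  shows "cadj (op_scale c T) = op_scale (cnj c) (cadj T)"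
  by (rule cadj_unique)
    (simp add: op_scale_def cinner_scaleC_left cinner_scaleC_right cadj_exists[OF T, rule_format])

lemma op_Re_eq:
  "op_Re T = (\<lambda>x. op_scale (1/2) T x + op_scale (1/2) (cadj T) x)"
  unfolding op_Re_def op_scale_def by (simp add: scaleR_scaleC scaleC_add_right)

lemma op_Re_bo:
  assumes T: "(T::'a::chilbert_space \<Rightarrow> 'a) \<in> bounded_ops"
  shows "op_Re T \<in> bounded_ops"
  unfolding op_Re_eq by (intro bo_add bo_scale cadj_bounded T)

lemma op_Re_add:
  assumes S: "(S::'a::chilbert_space \<Rightarrow> 'a) \<in> bounded_ops" and T: "T \<in> bounded_ops"
  shows "op_Re (\<lambda>x. S x + T x) = (\<lambda>x. op_Re S x + op_Re T x)"
  unfolding op_Re_def cadj_add[OF S T] by (simp add: scaleR_add_right ac_simps)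

lemma N_props:
  assumes "is_op_norm N"
  shows "\<And>T. T \<in> bounded_ops \<Longrightarrow> 0 \<le> N T"
    and "\<And>c T. T \<in> bounded_ops \<Longrightarrow> N (op_scale c T) = cmod c * N T"
    and "\<And>S T. S \<in> bounded_ops \<Longrightarrow> T \<in> bounded_ops \<Longrightarrow> N (\<lambda>x. S x + T x) \<le> N S + N T"
  using assms unfolding is_op_norm_def by blast+

lemma N_opRe_bound:
  fixes N :: "('h::chilbert_space \<Rightarrow> 'h) \<Rightarrow> real"
  assumes N: "is_op_norm N" and T: "T \<in> bounded_ops"
  shows "N (op_Re (op_scale (cis t) T)) \<le> (N T + N (cadj T)) / 2"
proof -
  let ?S = "op_scale (cis t) T"
  have S: "?S \<in> bounded_ops" by (rule bo_scale[OF T])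
  have aS: "cadj ?S \<in> bounded_ops" by (rule cadj_bounded[OF S])
  have "N (op_Re ?S) \<le> N (op_scale (1/2) ?S) + N (op_scale (1/2) (cadj ?S))"
    unfolding op_Re_eq by (intro N_props(3)[OF N] bo_scale S aS)
  also have "\<dots> = 1/2 * N ?S + 1/2 * N (cadj ?S)"
    by (simp add: N_props(2)[OF N] S aS)
  also have "N ?S = N T" by (simp add: N_props(2)[OF N] T)
  also have "cadj ?S = op_scale (cnj (cis t)) (cadj T)" by (rule cadj_scale[OF T])
  also have "N \<dots> = N (cadj T)" by (simp add: N_props(2)[OF N] cadj_bounded[OF T])
  finally show ?thesis by simp
qed

lemma wN_bdd:
  fixes N :: "('h::chilbert_space \<Rightarrow> 'h) \<Rightarrow> real"
  assumes N: "is_op_norm N" and T: "T \<in> bounded_ops"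
  shows "bdd_above (range (\<lambda>t. N (op_Re (op_scale (cis t) T))))"
  by (rule bdd_aboveI2[where M="(N T + N (cadj T))/2"]) (rule N_opRe_bound[OF N T])

lemma wN_ge:
  fixes N :: "('h::chilbert_space \<Rightarrow> 'h) \<Rightarrow> real"
  assumes N: "is_op_norm N" and T: "T \<in> bounded_ops"
  shows "N (op_Re (op_scale (cis t) T)) \<le> wN N T"
  unfolding wN_def by (rule cSUP_upper[OF _ wN_bdd[OF N T]]) simp

lemma wN_tri:
  fixes N :: "('h::chilbert_space \<Rightarrow> 'h) \<Rightarrow> real"
  assumes N: "is_op_norm N" and B: "B \<in> bounded_ops" and C: "C \<in> bounded_ops"
  shows "wN N (\<lambda>x. B x + scaleC (cis \<theta>) (C x)) \<le> wN N B + wN N C"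
  unfolding wN_def[of N "\<lambda>x. B x + scaleC (cis \<theta>) (C x)"]
proof (rule cSUP_least)
  show "UNIV \<noteq> {}" by simp
  fix t
  let ?B = "op_scale (cis t) B" and ?C = "op_scale (cis (t + \<theta>)) C"
  have SB: "?B \<in> bounded_ops" "?C \<in> bounded_ops" by (intro bo_scale B C)+
  have "op_scale (cis t) (\<lambda>x. B x + scaleC (cis \<theta>) (C x)) = (\<lambda>x. ?B x + ?C x)"
    by (simp add: op_scale_def scaleC_add_right scaleC_scaleC cis_mult)
  then have "op_Re (op_scale (cis t) (\<lambda>x. B x + scaleC (cis \<theta>) (C x))) = (\<lambda>x. op_Re ?B x + op_Re ?C x)"
    by (simp add: op_Re_add SB)
  then have "N (op_Re (op_scale (cis t) (\<lambda>x. B x + scaleC (cis \<theta>) (C x)))) \<le> N (op_Re ?B) + N (op_Re ?C)"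
    by (simp add: N_props(3)[OF N] op_Re_bo SB)
  also have "\<dots> \<le> wN N B + wN N C"
    by (intro add_mono wN_ge N B C)
  finally show "N (op_Re (op_scale (cis t) (\<lambda>x. B x + scaleC (cis \<theta>) (C x)))) \<le> wN N B + wN N C" .
qed

lemma wNe_ge:
  fixes N :: "('h::chilbert_space \<Rightarrow> 'h) \<Rightarrow> real"
  assumes N: "is_op_norm N" and B: "B \<in> bounded_ops" and C: "C \<in> bounded_ops"
  shows "wN N B \<le> wNe N B C" "wN N C \<le> wNe N B C"
proof -
  define Dk :: "(complex \<times> complex) set" where "Dk = {(l1, l2). (cmod l1)\<^sup>2 + (cmod l2)\<^sup>2 \<le> 1}"
  define T where "T l = (\<lambda>x. scaleC (fst l) (B x) + scaleC (snd l) (C x))" for l :: "complex \<times> complex"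
  define G where "G l = (SUP t::real. N (op_Re (op_scale (cis t) (T l))))" for l
  have wNe: "wNe N B C = (SUP l \<in> Dk. G l)"
    unfolding wNe_def G_def T_def Dk_def ..
  define M0 where "M0 = (N B + N C + N (cadj B) + N (cadj C)) / 2"
  have Tl: "T l = (\<lambda>x. op_scale (fst l) B x + op_scale (snd l) C x)" for l
    by (simp add: T_def op_scale_def)
  have Tbo: "T l \<in> bounded_ops" for l
    unfolding Tl by (intro bo_add bo_scale B C)
  have aT: "cadj (T l) = (\<lambda>y. op_scale (cnj (fst l)) (cadj B) y + op_scale (cnj (snd l)) (cadj C) y)" for l
    unfolding Tl by (simp add: cadj_add bo_scale B C cadj_scale)
  have G_le: "G l \<le> M0" if l: "l \<in> Dk" for l
  proof -
    have c1: "cmod (fst l) \<le> 1" and c2: "cmod (snd l) \<le> 1"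
    proof -
      have "(cmod (fst l))\<^sup>2 + (cmod (snd l))\<^sup>2 \<le> 1"
        using l unfolding Dk_def by (cases l) auto
      then have "(cmod (fst l))\<^sup>2 \<le> 1" "(cmod (snd l))\<^sup>2 \<le> 1"
        using zero_le_power2[of "cmod (fst l)"] zero_le_power2[of "cmod (snd l)"] by linarith+
      then show "cmod (fst l) \<le> 1" "cmod (snd l) \<le> 1"
        by (simp_all add: power_le_one_iff abs_square_le_1)
    qed
    have nB: "0 \<le> N B" "0 \<le> N C" "0 \<le> N (cadj B)" "0 \<le> N (cadj C)"
      using N_props(1)[OF N] B C cadj_bounded by blast+
    have "N (T l) \<le> N (op_scale (fst l) B) + N (op_scale (snd l) C)"
      unfolding Tl by (intro N_props(3)[OF N] bo_scale B C)
    also have "\<dots> = cmod (fst l) * N B + cmod (snd l) * N C"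
      by (simp add: N_props(2)[OF N] B C)
    also have "\<dots> \<le> N B + N C"
      using c1 c2 nB by (intro add_mono) (simp_all add: mult_left_le_one_le)
    finally have h1: "N (T l) \<le> N B + N C" .
    have "N (cadj (T l)) \<le> N (op_scale (cnj (fst l)) (cadj B)) + N (op_scale (cnj (snd l)) (cadj C))"
      unfolding aT by (intro N_props(3)[OF N] bo_scale cadj_bounded B C)
    also have "\<dots> = cmod (fst l) * N (cadj B) + cmod (snd l) * N (cadj C)"
      by (simp add: N_props(2)[OF N] cadj_bounded B C)
    also have "\<dots> \<le> N (cadj B) + N (cadj C)"
      using c1 c2 nB by (intro add_mono) (simp_all add: mult_left_le_one_le)
    finally have h2: "N (cadj (T l)) \<le> N (cadj B) + N (cadj C)" .
    show ?thesis unfolding G_def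
    proof (rule cSUP_least)
      show "UNIV \<noteq> {}" by simp
      fix t
      have "N (op_Re (op_scale (cis t) (T l))) \<le> (N (T l) + N (cadj (T l))) / 2"
        by (rule N_opRe_bound[OF N Tbo])
      also have "\<dots> \<le> M0" using h1 h2 by (simp add: M0_def)
      finally show "N (op_Re (op_scale (cis t) (T l))) \<le> M0" .
    qed
  qed
  have bdd: "bdd_above (G ` Dk)" using G_le by (intro bdd_aboveI2) auto
  have in1: "(1, 0) \<in> Dk" and in2: "(0, 1) \<in> Dk" by (auto simp: Dk_def)
  have "T (1, 0) = B" "T (0, 1) = C" by (auto simp: T_def scaleC_one)
  then have "G (1, 0) = wN N B" "G (0, 1) = wN N C" by (simp_all add: G_def wN_def)
  moreover have "G (1, 0) \<le> wNe N B C" "G (0, 1) \<le> wNe N B C"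
    unfolding wNe by (intro cSUP_upper bdd in1 in2)+
  ultimately show "wN N B \<le> wNe N B C" "wN N C \<le> wNe N B C" by simp_all
qed

theorem theorem2p11:
  fixes N :: "('h::chilbert_space \<Rightarrow> 'h) \<Rightarrow> real"
    and B C :: "'h \<Rightarrow> 'h" and \<theta> :: real
  assumes "is_op_norm N" and "B \<in> bounded_ops" and "C \<in> bounded_ops"
  shows "1/2 * wN N (\<lambda>x. B x + scaleC (cis \<theta>) (C x)) + 1/2 * \<bar>wN N B - wN N C\<bar>
           \<le> wNe N B C"
proof -
  have "wN N (\<lambda>x. B x + scaleC (cis \<theta>) (C x)) \<le> wN N B + wN N C"
    by (rule wN_tri[OF assms])
  moreover have "wN N B \<le> wNe N B C" "wN N C \<le> wNe N B C"
    by (rule wNe_ge[OF assms])+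
  moreover have "1/2 * a + 1/2 * \<bar>b - c\<bar> \<le> d"
    if h: "a \<le> b + c" "b \<le> d" "c \<le> d" for a b c d :: real
  proof (cases "b \<le> c")
    case True
    then have "\<bar>b - c\<bar> = c - b" by simp
    then show ?thesis using h by argo
  next
    case False
    then have "\<bar>b - c\<bar> = b - c" by simp
    then show ?thesis using h by argo
  qed
  ultimately show ?thesis by blast
qed

end
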